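(* Let $G$ be a connected $(c,d)$-biregular simple graph with $n$ vertices and $m$ edges, and let $\lambda_1\ge\lambda_2\ge\cdots\ge\lambda_n$ be its adjacency eigenvalues (so $\lambda_1=\sqrt{cd}$). Then the Kemeny's constant of the simple random walk on the edge space of $G$ is \[ \mathscr{K}_e(G)=2m-n+\sum_{i=2}^{n}\frac{\sqrt{cd}}{\sqrt{cd}-\lambda_i}. \]
   Context: A $(c,d)$-biregular graph is a bipartite graph in which every vertex in one part of the bipartition has degree $c$ and every vertex in the other part has degree $d$. Kemeny's constant of an irreducible finite Markov chain with transition matrix $P$ whose eigenvalues (with multiplicity) are $1=\rho_1,\rho_2,\dots,\rho_N$ (with $1$ simple) is $\mathscr{K}(P)=\sum_{i=2}^{N}\frac{1}{1-\rho_i}$. $\mathscr{K}_e(G)$ is Kemeny's constant of the simple random walk on the arcs of $G$ (the ordered pairs $(u,v)$ with $\{u,v\}$ an edge), where from $(u,v)$ one moves to $(v,w)$ with probability $1/\deg(v)$ for each neighbor $w$ of $v$. *)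

theory Defs
  imports "Jordan_Normal_Form.Char_Poly"
begin

definition simple_graph :: "'a set \<Rightarrow> 'a set set \<Rightarrow> bool" where
  "simple_graph V E \<longleftrightarrow> finite V \<and> (\<forall>e\<in>E. \<exists>u v. e = {u, v} \<and> u \<noteq> v \<and> u \<in> V \<and> v \<in> V)"

definition adj :: "'a set set \<Rightarrow> 'a \<Rightarrow> 'a \<Rightarrow> bool" where
  "adj E u v \<longleftrightarrow> {u, v} \<in> E"

definition degree :: "'a set set \<Rightarrow> 'a \<Rightarrow> nat" where
  "degree E v = card {w. {v, w} \<in> E}"

definition connected_graph :: "'a set \<Rightarrow> 'a set set \<Rightarrow> bool" where
  "connected_graph V E \<longleftrightarrow> V \<noteq> {} \<and> (\<forall>u\<in>V. \<forall>v\<in>V. (adj E)\<^sup>*\<^sup>* u v)"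

definition biregular :: "'a set \<Rightarrow> 'a set set \<Rightarrow> nat \<Rightarrow> nat \<Rightarrow> bool" where
  "biregular V E c d \<longleftrightarrow> (\<exists>X Y. X \<union> Y = V \<and> X \<inter> Y = {} \<and>
     (\<forall>e\<in>E. \<exists>x\<in>X. \<exists>y\<in>Y. e = {x, y}) \<and>
     (\<forall>x\<in>X. degree E x = c) \<and> (\<forall>y\<in>Y. degree E y = d))"

definition arcs :: "'a set set \<Rightarrow> ('a \<times> 'a) set" where
  "arcs E = {(u, v). {u, v} \<in> E}"

(* a fixed (arbitrary) enumeration of a finite set; characteristic polynomials
   below do not depend on the choice *)
definition enum_set :: "'b set \<Rightarrow> 'b list" where
  "enum_set S = (SOME xs. set xs = S \<and> distinct xs)"

definition mat_on :: "'b set \<Rightarrow> ('b \<Rightarrow> 'b \<Rightarrow> 'c) \<Rightarrow> 'c mat" where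
  "mat_on S f = mat (card S) (card S) (\<lambda>(i, j). f (enum_set S ! i) (enum_set S ! j))"

definition eigenvalues_mset :: "complex mat \<Rightarrow> complex multiset" where
  "eigenvalues_mset A = proots (char_poly A)"

definition kemeny :: "complex mat \<Rightarrow> complex" where
  "kemeny P = (\<Sum>\<rho> \<in># eigenvalues_mset P - {#1#}. 1 / (1 - \<rho>))"

definition adjacency_matrix :: "'a set \<Rightarrow> 'a set set \<Rightarrow> complex mat" where
  "adjacency_matrix V E = mat_on V (\<lambda>u v. if {u, v} \<in> E then 1 else 0)"

(* simple random walk on arcs: (u,v) \<mapsto> (v,w) with prob 1/deg v, w a neighbour of v *)
definition arc_walk_matrix :: "'a set set \<Rightarrow> complex mat" where
  "arc_walk_matrix E = mat_on (arcs E)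
     (\<lambda>(u, v) (x, w). if x = v \<and> {v, w} \<in> E then 1 / of_nat (degree E v) else 0)"

definition kemeny_edge :: "'a set set \<Rightarrow> complex" where
  "kemeny_edge E = kemeny (arc_walk_matrix E)"

end

theory Submission
  imports Defs "Jordan_Normal_Form.Jordan_Normal_Form_Existence"
begin

lemma sylvester_char_poly:
  fixes H :: "'a::field mat"
  assumes H: "H \<in> carrier_mat N n" and T: "T \<in> carrier_mat n N"
  shows "[:0,1:]^N * char_poly (T * H) = [:0,1:]^n * char_poly (H * T)"
proof -
  define x :: "'a poly" where "x = [:0,1:]"
  define h where "h = map_mat (\<lambda>a. [:a:]) H"
  define t where "t = map_mat (\<lambda>a. [:a:]) T"
  have h: "h \<in> carrier_mat N n" and t: "t \<in> carrier_mat n N" using H T by (auto simp: h_def t_def)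
  have cp1: "char_poly_matrix (H*T) = x \<cdot>\<^sub>m 1\<^sub>m N + (- (h*t))"
  proof -
    have "map_mat (\<lambda>a. [:-a:]) (H*T) = - map_mat (\<lambda>a. [:a:]) (H*T)"
      by (rule eq_matI) auto
    also have "\<dots> = - (h*t)" unfolding h_def t_def using map_poly_mult(1)[OF H T] by simp
    finally show ?thesis unfolding char_poly_matrix_def x_def using H by simp
  qed
  have cp2: "char_poly_matrix (T*H) = x \<cdot>\<^sub>m 1\<^sub>m n + (- (t*h))"
  proof -
    have "map_mat (\<lambda>a. [:-a:]) (T*H) = - map_mat (\<lambda>a. [:a:]) (T*H)"
      by (rule eq_matI) auto
    also have "\<dots> = - (t*h)" unfolding h_def t_def using map_poly_mult(1)[OF T H] by simp
    finally show ?thesis unfolding char_poly_matrix_def x_def using T by simp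
  qed
  define M where "M = four_block_mat (1\<^sub>m N) h t (x \<cdot>\<^sub>m 1\<^sub>m n)"
  define L where "L = four_block_mat (x \<cdot>\<^sub>m 1\<^sub>m N) (-h) (0\<^sub>m n N) (1\<^sub>m n)"
  define U1 where "U1 = four_block_mat (1\<^sub>m N) (0\<^sub>m N n) t (1\<^sub>m n)"
  define U2 where "U2 = four_block_mat (1\<^sub>m N) h (0\<^sub>m n N) (x \<cdot>\<^sub>m 1\<^sub>m n + (- (t*h)))"
  have D2: "x \<cdot>\<^sub>m 1\<^sub>m n + (- (t*h)) \<in> carrier_mat n n" using t h by auto
  have LM: "L * M = four_block_mat (x \<cdot>\<^sub>m 1\<^sub>m N + (- (h*t))) (0\<^sub>m N n) t (x \<cdot>\<^sub>m 1\<^sub>m n)"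
    unfolding M_def L_def
    apply (subst mult_four_block_mat[OF smult_carrier_mat[OF one_carrier_mat] uminus_carrier_mat[OF h] zero_carrier_mat one_carrier_mat one_carrier_mat h t smult_carrier_mat[OF one_carrier_mat]])
    apply (rule cong_four_block_mat)
    using h t apply (auto)
    done
  have MU: "M = U1 * U2"
    unfolding M_def U1_def U2_def
    by (subst mult_four_block_mat[OF one_carrier_mat zero_carrier_mat t one_carrier_mat one_carrier_mat h zero_carrier_mat D2], insert h t, auto)
  have D1: "x \<cdot>\<^sub>m 1\<^sub>m N + (- (h*t)) \<in> carrier_mat N N" using t h by auto
  have U1c: "U1 \<in> carrier_mat (N+n) (N+n)" unfolding U1_def by auto
  have U2c: "U2 \<in> carrier_mat (N+n) (N+n)" unfolding U2_def using D2 by auto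
  have Lc: "L \<in> carrier_mat (N+n) (N+n)" unfolding L_def by auto
  have Mc: "M \<in> carrier_mat (N+n) (N+n)" unfolding M_def by auto
  have dU1: "det U1 = 1" unfolding U1_def
    by (subst det_four_block_mat_upper_right_zero[OF one_carrier_mat refl t one_carrier_mat]) simp
  have dU2: "det U2 = char_poly (T*H)" unfolding U2_def char_poly_def cp2
    by (subst det_four_block_mat_lower_left_zero[OF one_carrier_mat h refl D2]) simp
  have dL: "det L = x ^ N" unfolding L_def
    by (subst det_four_block_mat_lower_left_zero[OF smult_carrier_mat[OF one_carrier_mat] uminus_carrier_mat[OF h] refl one_carrier_mat]) simp
  have dLM: "det (L*M) = char_poly (H*T) * x ^ n" unfolding LM char_poly_def cp1
    by (subst det_four_block_mat_upper_right_zero[OF D1 refl t smult_carrier_mat[OF one_carrier_mat]]) simp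
  have "det (L*M) = det L * det M" by (rule det_mult[OF Lc Mc])
  also have "det M = char_poly (T*H)" unfolding MU det_mult[OF U1c U2c] dU1 dU2 by simp
  finally have "x ^ N * char_poly (T*H) = char_poly (H*T) * x ^ n" using dL dLM by simp
  thus ?thesis unfolding x_def by (simp add: mult.commute)
qed

lemma enum_set_props: assumes "finite S"
  shows "set (enum_set S) = S" "distinct (enum_set S)" "length (enum_set S) = card S"
proof -
  have "set (enum_set S) = S \<and> distinct (enum_set S)"
    unfolding enum_set_def by (rule someI_ex, rule finite_distinct_list[OF assms])
  thus "set (enum_set S) = S" "distinct (enum_set S)" by auto
  thus "length (enum_set S) = card S" using distinct_card by metis
qed

lemma sum_enum: assumes "distinct xs"
  shows "(\<Sum>k = 0..<length xs. g (xs!k)) = (\<Sum>v\<in>set xs. g v)"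
proof -
  have "(\<Sum>v\<in>set xs. g v) = (\<Sum>k\<in>{0..<length xs}. g (xs!k))"
    by (rule sum.reindex_bij_betw[symmetric])
      (metis assms atLeast_upt bij_betw_nth set_upt)
  thus ?thesis by simp
qed

lemma enum_nth_inj: assumes "distinct xs" "i < length xs" "j < length xs"
  shows "(xs!i = xs!j) = (i = j)" using assms nth_eq_iff_index_eq by blast


lemma graph_facts:
  assumes sg: "simple_graph V E" and ne: "E \<noteq> {}" and br: "biregular V E c d"
  shows "finite V" "finite E" "arcs E \<subseteq> V \<times> V" "finite (arcs E)"
    "card (arcs E) = 2 * card E" "c \<ge> 1" "d \<ge> 1"
    "\<And>v. v \<in> V \<Longrightarrow> degree E v \<ge> 1"
    "\<And>u v. {u,v} \<in> E \<Longrightarrow> degree E u * degree E v = c * d"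
    "\<And>v. {w. {v,w} \<in> E} \<subseteq> V" "V \<noteq> {}"
proof -
  show fV: "finite V" using sg unfolding simple_graph_def by auto
  have EV: "\<And>e. e \<in> E \<Longrightarrow> \<exists>u v. e = {u, v} \<and> u \<noteq> v \<and> u \<in> V \<and> v \<in> V"
    using sg unfolding simple_graph_def by auto
  have "E \<subseteq> Pow V" using EV by blast
  thus fE: "finite E" using fV by (meson finite_Pow_iff finite_subset)
  have uv: "\<And>u v. {u,v} \<in> E \<Longrightarrow> u \<in> V \<and> v \<in> V \<and> u \<noteq> v"
  proof -
    fix u v assume "{u,v} \<in> E"
    from EV[OF this] obtain a b where "{u,v} = {a,b}" "a \<noteq> b" "a \<in> V" "b \<in> V" by blast
    thus "u \<in> V \<and> v \<in> V \<and> u \<noteq> v" by (metis doubleton_eq_iff)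
  qed
  show aV: "arcs E \<subseteq> V \<times> V" unfolding arcs_def using uv by auto
  thus fA: "finite (arcs E)" using fV by (meson finite_SigmaI finite_subset)
  show nbV: "\<And>v. {w. {v,w} \<in> E} \<subseteq> V" using uv by auto
  have fnb: "\<And>v. finite {w. {v,w} \<in> E}" using nbV fV finite_subset by metis
  have arcsU: "arcs E = (\<Union>e\<in>E. {(u,v). e = {u,v}})" unfolding arcs_def by auto
  have "card (arcs E) = (\<Sum>e\<in>E. card {(u,v). e = {u,v}})"
    unfolding arcsU
  proof (rule card_UN_disjoint[OF fE])
    show "\<forall>e\<in>E. finite {(u, v). e = {u, v}}"
    proof
      fix e assume "e \<in> E"
      then obtain a b where "e = {a,b}" using EV by blast
      hence "{(u, v). e = {u, v}} \<subseteq> {a,b} \<times> {a,b}" by auto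
      thus "finite {(u, v). e = {u, v}}" by (rule finite_subset) auto
    qed
    show "\<forall>i\<in>E. \<forall>j\<in>E. i \<noteq> j \<longrightarrow> {(u, v). i = {u, v}} \<inter> {(u, v). j = {u, v}} = {}" by auto
  qed
  also have "\<dots> = (\<Sum>e\<in>E. 2)"
  proof (rule sum.cong[OF refl])
    fix e assume "e \<in> E"
    then obtain a b where ab: "e = {a,b}" "a \<noteq> b" using EV by blast
    hence "{(u, v). e = {u, v}} = {(a,b),(b,a)}" by (auto simp: doubleton_eq_iff)
    thus "card {(u, v). e = {u, v}} = 2" using ab by simp
  qed
  finally show "card (arcs E) = 2 * card E" by simp
  from br obtain X Y where XY: "X \<union> Y = V" "X \<inter> Y = {}" "\<forall>e\<in>E. \<exists>x\<in>X. \<exists>y\<in>Y. e = {x, y}"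
     "\<forall>x\<in>X. degree E x = c" "\<forall>y\<in>Y. degree E y = d" unfolding biregular_def by blast
  from ne obtain e where "e \<in> E" by blast
  with XY obtain x y where xy: "x \<in> X" "y \<in> Y" "{x,y} \<in> E" by metis
  have "y \<in> {w. {x,w} \<in> E}" using xy by simp
  hence "degree E x \<ge> 1" unfolding degree_def using fnb[of x]
    by (metis One_nat_def Suc_leI card_gt_0_iff empty_iff)
  thus c1: "c \<ge> 1" using XY xy by simp
  have "x \<in> {w. {y,w} \<in> E}" using xy by (simp add: insert_commute)
  hence "degree E y \<ge> 1" unfolding degree_def using fnb[of y]
    by (metis One_nat_def Suc_leI card_gt_0_iff empty_iff)
  thus d1: "d \<ge> 1" using XY xy by simp
  show "V \<noteq> {}" using xy XY by auto
  show "\<And>v. v \<in> V \<Longrightarrow> degree E v \<ge> 1" using XY c1 d1 by auto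
  show "\<And>u v. {u,v} \<in> E \<Longrightarrow> degree E u * degree E v = c * d"
  proof -
    fix u v assume "{u,v} \<in> E"
    with XY obtain x y where "x \<in> X" "y \<in> Y" "{u,v} = {x,y}" by metis
    thus "degree E u * degree E v = c * d" using XY by (auto simp: doubleton_eq_iff)
  qed
qed


lemma factor_mats:
  fixes E :: "'a set set"
  assumes fV: "finite V" and aV: "arcs E \<subseteq> V \<times> V" and fA: "finite (arcs E)"
  defines "vs \<equiv> enum_set V" and "as \<equiv> enum_set (arcs E)"
  defines "n \<equiv> card V" and "N \<equiv> card (arcs E)"
  defines "H \<equiv> mat N n (\<lambda>(i,j). if vs!j = snd (as!i) then 1 else (0::complex))"
  defines "T \<equiv> mat n N (\<lambda>(i,j). if fst (as!j) = vs!i then 1 / of_nat (degree E (vs!i)) else (0::complex))"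
  shows "H * T = arc_walk_matrix E"
    "T * H = mat n n (\<lambda>(i,j). if {vs!i, vs!j} \<in> E then 1 / of_nat (degree E (vs!i)) else 0)"
proof -
  note V = enum_set_props[OF fV, folded vs_def n_def]
  note Ar = enum_set_props[OF fA, folded as_def N_def]
  have asE: "\<And>i. i < N \<Longrightarrow> {fst (as!i), snd (as!i)} \<in> E"
    using Ar unfolding arcs_def by (metis (mono_tags, lifting) case_prodE fst_conv mem_Collect_eq nth_mem snd_conv)
  have asV: "\<And>i. i < N \<Longrightarrow> snd (as!i) \<in> V" using Ar aV by (metis mem_Sigma_iff nth_mem prod.collapse subset_iff)
  show "H * T = arc_walk_matrix E"
  proof (rule eq_matI)
    fix i j assume i: "i < dim_row (arc_walk_matrix E)" and j: "j < dim_col (arc_walk_matrix E)"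
    hence i: "i < N" and j: "j < N" by (auto simp: arc_walk_matrix_def mat_on_def N_def)
    have "(H * T) $$ (i,j) = (\<Sum>k = 0..<n. (if vs!k = snd (as!i) then 1 else 0) *
        (if fst (as!j) = vs!k then 1 / of_nat (degree E (vs!k)) else 0))"
      using i j by (simp add: H_def T_def scalar_prod_def)
    also have "\<dots> = (\<Sum>v\<in>V. (if v = snd (as!i) then 1 else 0) *
        (if fst (as!j) = v then 1 / of_nat (degree E v) else 0))"
      using sum_enum[OF V(2), of "\<lambda>v. (if v = snd (as!i) then 1 else 0) *
        (if fst (as!j) = v then 1 / of_nat (degree E v) else (0::complex))"] V by simp
    also have "\<dots> = (\<Sum>v\<in>V. if v = snd (as!i) then 
        (if fst (as!j) = v then 1 / of_nat (degree E v) else 0) else 0)"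
      by (rule sum.cong) auto
    also have "\<dots> = (if fst (as!j) = snd (as!i) then 1 / of_nat (degree E (snd (as!i))) else 0)"
      using fV asV[OF i] by simp
    also have "\<dots> = arc_walk_matrix E $$ (i,j)"
      using i j asE[OF j] unfolding arc_walk_matrix_def mat_on_def as_def[symmetric] N_def[symmetric]
      by (auto simp: case_prod_beta)
    finally show "(H * T) $$ (i,j) = arc_walk_matrix E $$ (i,j)" .
  qed (auto simp: H_def T_def arc_walk_matrix_def mat_on_def N_def)
  show "T * H = mat n n (\<lambda>(i,j). if {vs!i, vs!j} \<in> E then 1 / of_nat (degree E (vs!i)) else 0)"
  proof (rule eq_matI)
    fix i j assume "i < dim_row (mat n n (\<lambda>(i,j). if {vs!i, vs!j} \<in> E then 1 / of_nat (degree E (vs!i)) else (0::complex)))"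
      "j < dim_col (mat n n (\<lambda>(i,j). if {vs!i, vs!j} \<in> E then 1 / of_nat (degree E (vs!i)) else (0::complex)))"
    hence i: "i < n" and j: "j < n" by auto
    have "(T * H) $$ (i,j) = (\<Sum>k = 0..<N. (if fst (as!k) = vs!i then 1 / of_nat (degree E (vs!i)) else 0) *
        (if vs!j = snd (as!k) then 1 else 0))"
      using i j by (simp add: H_def T_def scalar_prod_def)
    also have "\<dots> = (\<Sum>a\<in>arcs E. (if fst a = vs!i then 1 / of_nat (degree E (vs!i)) else 0) *
        (if vs!j = snd a then 1 else 0))"
      using sum_enum[OF Ar(2), of "\<lambda>a. (if fst a = vs!i then 1 / of_nat (degree E (vs!i)) else 0) *
        (if vs!j = snd a then 1 else (0::complex))"] Ar by simp
    also have "\<dots> = (\<Sum>a\<in>arcs E. if a = (vs!i, vs!j) then 1 / of_nat (degree E (vs!i)) else 0)"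
      by (rule sum.cong) auto
    also have "\<dots> = (if {vs!i, vs!j} \<in> E then 1 / of_nat (degree E (vs!i)) else 0)"
      using fA by (simp add: arcs_def)
    finally show "(T * H) $$ (i,j) = mat n n (\<lambda>(i,j). if {vs!i, vs!j} \<in> E then 1 / of_nat (degree E (vs!i)) else 0) $$ (i,j)"
      using i j by simp
  qed (auto simp: H_def T_def)
qed


lemma diag_left: fixes f :: "nat \<Rightarrow> 'b::comm_ring_1"
  assumes "B \<in> carrier_mat n m"
  shows "mat n n (\<lambda>(i,j). if i = j then f i else 0) * B = mat n m (\<lambda>(i,j). f i * B$$(i,j))"
proof (rule eq_matI)
  fix i j assume "i < dim_row (mat n m (\<lambda>(i,j). f i * B$$(i,j)))" "j < dim_col (mat n m (\<lambda>(i,j). f i * B$$(i,j)))"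
  hence i: "i < n" and j: "j < m" by auto
  have "(mat n n (\<lambda>(i,j). if i = j then f i else 0) * B) $$ (i,j) = (\<Sum>k = 0..<n. (if i = k then f i else 0) * B$$(k,j))"
    using i j assms by (simp add: scalar_prod_def)
  also have "\<dots> = (\<Sum>k = 0..<n. if i = k then f i * B$$(k,j) else 0)" by (rule sum.cong) auto
  also have "\<dots> = f i * B$$(i,j)" using i by simp
  finally show "(mat n n (\<lambda>(i,j). if i = j then f i else 0) * B) $$ (i,j) = mat n m (\<lambda>(i,j). f i * B$$(i,j)) $$ (i,j)"
    using i j by simp
qed (insert assms, auto)

lemma diag_right: fixes f :: "nat \<Rightarrow> 'b::comm_ring_1"
  assumes "B \<in> carrier_mat m n"
  shows "B * mat n n (\<lambda>(i,j). if i = j then f i else 0) = mat m n (\<lambda>(i,j). B$$(i,j) * f j)"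
proof (rule eq_matI)
  fix i j assume "i < dim_row (mat m n (\<lambda>(i,j). B$$(i,j) * f j))" "j < dim_col (mat m n (\<lambda>(i,j). B$$(i,j) * f j))"
  hence i: "i < m" and j: "j < n" by auto
  have "(B * mat n n (\<lambda>(i,j). if i = j then f i else 0)) $$ (i,j) = (\<Sum>k = 0..<n. B$$(i,k) * (if k = j then f k else 0))"
    using i j assms by (simp add: scalar_prod_def)
  also have "\<dots> = (\<Sum>k = 0..<n. if k = j then B$$(i,k) * f k else 0)" by (rule sum.cong) auto
  also have "\<dots> = B$$(i,j) * f j" using j by simp
  finally show "(B * mat n n (\<lambda>(i,j). if i = j then f i else 0)) $$ (i,j) = mat m n (\<lambda>(i,j). B$$(i,j) * f j) $$ (i,j)"
    using i j by simp
qed (insert assms, auto)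

lemma scaling_similar:
  fixes g :: "nat \<Rightarrow> nat" and e :: "nat \<Rightarrow> nat \<Rightarrow> bool"
  assumes gpos: "\<And>i. i < n \<Longrightarrow> g i \<ge> 1"
    and ge: "\<And>i j. i < n \<Longrightarrow> j < n \<Longrightarrow> e i j \<Longrightarrow> g i * g j = c * d"
    and cd: "c * d > 0"
  shows "similar_mat (mat n n (\<lambda>(i,j). if e i j then 1 / of_nat (g i) else (0::complex)))
     ((1 / complex_of_real (sqrt (real c * real d))) \<cdot>\<^sub>m mat n n (\<lambda>(i,j). if e i j then 1 else 0))"
proof -
  define \<sigma> where "\<sigma> i = complex_of_real (sqrt (real (g i)))" for i
  define s where "s = sqrt (real c * real d)"
  define B where "B = (1 / complex_of_real s) \<cdot>\<^sub>m mat n n (\<lambda>(i,j). if e i j then 1 else (0::complex))"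
  define P where "P = mat n n (\<lambda>(i,j). if i = j then 1 / \<sigma> i else 0)"
  define Q where "Q = mat n n (\<lambda>(i,j). if i = j then \<sigma> i else 0)"
  have s0: "s > 0" using cd unfolding s_def by simp
  have sig0: "\<And>i. i < n \<Longrightarrow> \<sigma> i \<noteq> 0" using gpos unfolding \<sigma>_def by fastforce
  have PQ: "P * Q = 1\<^sub>m n" unfolding P_def 
    by (subst diag_left[of _ n n], simp add: Q_def, rule eq_matI, auto simp: Q_def sig0)
  have QP: "Q * P = 1\<^sub>m n" unfolding Q_def 
    by (subst diag_left[of _ n n], simp add: P_def, rule eq_matI, auto simp: P_def sig0)
  have Bc: "B \<in> carrier_mat n n" unfolding B_def by simp
  have main: "P * B * Q = mat n n (\<lambda>(i,j). if e i j then 1 / of_nat (g i) else (0::complex))"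
    unfolding P_def Q_def
    apply (subst diag_left[OF Bc])
    apply (subst diag_right[of _ n n], simp)
  proof (rule eq_matI)
    fix i j assume "i < dim_row (mat n n (\<lambda>(i,j). if e i j then 1 / of_nat (g i) else (0::complex)))"
      "j < dim_col (mat n n (\<lambda>(i,j). if e i j then 1 / of_nat (g i) else (0::complex)))"
    hence i: "i < n" and j: "j < n" by auto
    show "mat n n (\<lambda>(i, j). mat n n (\<lambda>(i, j). 1 / \<sigma> i * B $$ (i, j)) $$ (i, j) * \<sigma> j) $$ (i, j) =
         mat n n (\<lambda>(i, j). if e i j then 1 / complex_of_nat (g i) else 0) $$ (i, j)"
    proof (cases "e i j")
      case True
      have gi: "real (g i) \<ge> 1" "real (g j) \<ge> 1" using gpos i j by auto
      have prod: "real (g i) * real (g j) = s^2" unfolding s_def using ge[OF i j True] cd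
        by (metis of_nat_0_le_iff of_nat_mult real_sqrt_pow2 zero_le_mult_iff)
      have "sqrt (real (g j)) / (sqrt (real (g i)) * s) = 1 / real (g i)"
      proof -
        have "s = sqrt (real (g i)) * sqrt (real (g j))" using prod s0
          by (metis gi(1) gi(2) less_eq_real_def order_trans real_sqrt_mult real_sqrt_unique zero_le_one)
        moreover have "sqrt (real (g i)) * sqrt (real (g i)) = real (g i)" by simp
        ultimately show ?thesis using gi by (simp add: field_simps)
      qed
      hence "complex_of_real (sqrt (real (g j)) / (sqrt (real (g i)) * s)) = 1 / complex_of_nat (g i)"
        by (metis of_real_divide of_real_1 of_real_of_nat_eq)
      thus ?thesis using i j True by (simp add: B_def \<sigma>_def field_simps)
    next
      case False
      thus ?thesis using i j by (simp add: B_def)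
    qed
  qed auto
  show ?thesis
    by (rule similar_matI[of _ _ P Q n], insert PQ QP main, auto simp: P_def Q_def B_def s_def)
qed


lemma stoch_eig_bound:
  fixes Q :: "complex mat" and r :: "nat \<Rightarrow> nat \<Rightarrow> real"
  assumes Qc: "Q \<in> carrier_mat n n"
    and r: "\<And>i j. i < n \<Longrightarrow> j < n \<Longrightarrow> Q$$(i,j) = of_real (r i j)"
    and rnn: "\<And>i j. r i j \<ge> 0"
    and rs: "\<And>i. i < n \<Longrightarrow> (\<Sum>j=0..<n. r i j) = 1"
    and root: "poly (char_poly Q) \<mu> = 0"
  shows "cmod \<mu> \<le> 1"
proof -
  have "eigenvalue Q \<mu>" using eigenvalue_root_char_poly[OF Qc] root by simp
  then obtain v where v: "v \<in> carrier_vec n" "v \<noteq> 0\<^sub>v n" "Q *\<^sub>v v = \<mu> \<cdot>\<^sub>v v"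
    unfolding eigenvalue_def eigenvector_def using Qc by auto
  obtain j0 where j0: "j0 < n" "v$j0 \<noteq> 0" using v(1,2)
    by (metis eq_vecI carrier_vecD index_zero_vec(1) index_zero_vec(2))
  define m where "m = Max ((\<lambda>j. cmod (v$j)) ` {0..<n})"
  have "m \<in> (\<lambda>j. cmod (v$j)) ` {0..<n}" unfolding m_def using j0 by (intro Max_in) auto
  then obtain k where k: "k < n" "cmod (v$k) = m" by auto
  have mx: "\<And>j. j < n \<Longrightarrow> cmod (v$j) \<le> m" unfolding m_def by (intro Max_ge) auto
  have mpos: "m > 0" using mx[OF j0(1)] j0 by (metis zero_less_norm_iff order_less_le_trans)
  have "(Q *\<^sub>v v) $ k = (\<Sum>j=0..<n. Q$$(k,j) * v$j)"
    using k Qc v(1) by (simp add: scalar_prod_def)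
  hence e2: "(Q *\<^sub>v v) $ k = (\<Sum>j=0..<n. Q$$(k,j) * v$j)" .
  have e1: "(Q *\<^sub>v v) $ k = \<mu> * v$k" using v(3) k v(1) by simp
  have e3: "(\<Sum>j=0..<n. Q$$(k,j) * v$j) = (\<Sum>j=0..<n. of_real (r k j) * v$j)"
    by (rule sum.cong) (auto simp: r k(1))
  have eq: "\<mu> * v$k = (\<Sum>j=0..<n. of_real (r k j) * v$j)" using e1 e2 e3 by simp
  have "cmod \<mu> * m = cmod (\<mu> * v$k)" using k by (simp add: norm_mult)
  also have "\<dots> \<le> (\<Sum>j=0..<n. cmod (of_real (r k j) * v$j))" unfolding eq by (rule norm_sum)
  also have "\<dots> = (\<Sum>j=0..<n. r k j * cmod (v$j))" using rnn by (simp add: norm_mult)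
  also have "\<dots> \<le> (\<Sum>j=0..<n. r k j * m)" using rnn mx by (intro sum_mono mult_left_mono) auto
  also have "\<dots> = m" using rs[OF k(1)] by (simp add: sum_distrib_right[symmetric])
  finally show ?thesis using mpos by simp
qed

lemma stoch_eig_one:
  fixes Q :: "complex mat" and r :: "nat \<Rightarrow> nat \<Rightarrow> real"
  assumes Qc: "Q \<in> carrier_mat n n" and n: "n > 0"
    and r: "\<And>i j. i < n \<Longrightarrow> j < n \<Longrightarrow> Q$$(i,j) = of_real (r i j)"
    and rs: "\<And>i. i < n \<Longrightarrow> (\<Sum>j=0..<n. r i j) = 1"
  shows "poly (char_poly Q) 1 = 0"
proof -
  have "eigenvector Q (vec n (\<lambda>_. 1)) 1"
    unfolding eigenvector_def
  proof (intro conjI)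
    show "vec n (\<lambda>_. 1) \<in> carrier_vec (dim_row Q)" using Qc by simp
    show "vec n (\<lambda>_. 1::complex) \<noteq> 0\<^sub>v (dim_row Q)"
    proof
      assume eq: "vec n (\<lambda>_. 1::complex) = 0\<^sub>v (dim_row Q)"
      have "vec n (\<lambda>_. 1::complex) $ 0 = 0\<^sub>v (dim_row Q) $ 0" using eq by (rule arg_cong[where f="\<lambda>v. v $ 0"])
      thus False using Qc n by simp
    qed
    show "Q *\<^sub>v vec n (\<lambda>_. 1) = 1 \<cdot>\<^sub>v vec n (\<lambda>_. 1)"
    proof (rule eq_vecI)
      fix i assume "i < dim_vec (1 \<cdot>\<^sub>v vec n (\<lambda>_. (1::complex)))"
      hence i: "i < n" by simp
      have "(Q *\<^sub>v vec n (\<lambda>_. 1)) $ i = (\<Sum>j=0..<n. of_real (r i j))"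
        using i Qc r by (simp add: scalar_prod_def)
      also have "\<dots> = complex_of_real (\<Sum>j=0..<n. r i j)" by (rule of_real_sum[symmetric])
      also have "\<dots> = 1" using rs[OF i] by simp
      finally show "(Q *\<^sub>v vec n (\<lambda>_. 1)) $ i = (1 \<cdot>\<^sub>v vec n (\<lambda>_. 1)) $ i" using i by simp
    qed (insert Qc, auto)
  qed
  hence "eigenvalue Q 1" unfolding eigenvalue_def by blast
  thus ?thesis using eigenvalue_root_char_poly[OF Qc] by simp
qed


lemma count_image_inj: assumes "inj f" shows "count (image_mset f M) (f x) = count M x"
proof (induct M)
  case empty show ?case by simp
next
  case (add a M) thus ?case using assms by (simp add: inj_eq)
qed

lemma sum_if_card: assumes "finite S"
  shows "(\<Sum>w\<in>S. if P w then (a::real) else 0) = real (card {w\<in>S. P w}) * a"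
proof -
  have "(\<Sum>w\<in>S. if P w then (a::real) else 0) = (\<Sum>w\<in>{w\<in>S. P w}. a)"
    by (rule sum.inter_filter[OF assms, symmetric])
  thus ?thesis by simp
qed

theorem lemma4p1:
  fixes V :: "'a set" and E :: "'a set set" and c d :: nat and lam :: "nat \<Rightarrow> real"
  assumes "simple_graph V E"
    and "connected_graph V E"
    and "E \<noteq> {}"
    and "biregular V E c d"
    and "\<And>i j. 1 \<le> i \<Longrightarrow> i \<le> j \<Longrightarrow> j \<le> card V \<Longrightarrow> lam j \<le> lam i"
    and "eigenvalues_mset (adjacency_matrix V E) = image_mset (\<lambda>i. complex_of_real (lam i)) (mset_set {1..card V})"
  shows "kemeny_edge E = complex_of_real
           (2 * real (card E) - real (card V) +
            (\<Sum>i = 2..card V. sqrt (real c * real d) / (sqrt (real c * real d) - lam i)))"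
proof -
  note gf = graph_facts[OF assms(1) assms(3) assms(4)]
  note fV = gf(1) and aV = gf(3) and fA = gf(4)
  define vs where "vs = enum_set V"
  define as where "as = enum_set (arcs E)"
  define n where "n = card V"
  define N where "N = card (arcs E)"
  define H where "H = mat N n (\<lambda>(i,j). if vs!j = snd (as!i) then 1 else (0::complex))"
  define T where "T = mat n N (\<lambda>(i,j). if fst (as!j) = vs!i then 1 / of_nat (degree E (vs!i)) else (0::complex))"
  define Q where "Q = mat n n (\<lambda>(i,j). if {vs!i, vs!j} \<in> E then 1 / of_nat (degree E (vs!i)) else (0::complex))"
  define A where "A = adjacency_matrix V E"
  define s where "s = sqrt (real c * real d)"
  define sc where "sc = complex_of_real s"
  note V = enum_set_props[OF fV, folded vs_def n_def]
  have HT: "H * T = arc_walk_matrix E" and TH: "T * H = Q"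
    using factor_mats[OF fV aV fA] unfolding H_def T_def Q_def vs_def as_def n_def N_def by auto
  have Aeq: "A = mat n n (\<lambda>(i,j). if {vs!i, vs!j} \<in> E then 1 else 0)"
    unfolding A_def adjacency_matrix_def mat_on_def vs_def n_def by simp
  have cd: "c * d > 0" using gf(6,7) by simp
  have s0: "s > 0" unfolding s_def using cd by simp
  have sc0: "sc \<noteq> 0" unfolding sc_def using s0 by simp
  have vsV: "\<And>i. i < n \<Longrightarrow> vs!i \<in> V" using V by auto
  have sim: "similar_mat Q ((1 / sc) \<cdot>\<^sub>m A)"
    unfolding Q_def Aeq sc_def s_def
    by (rule scaling_similar[where g = "\<lambda>i. degree E (vs!i)" and e = "\<lambda>i j. {vs!i, vs!j} \<in> E"])
      (use gf(8,9) vsV cd in auto)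
  have Hc: "H \<in> carrier_mat N n" and Tc: "T \<in> carrier_mat n N" unfolding H_def T_def by auto
  have Qc: "Q \<in> carrier_mat n n" and Ac: "A \<in> carrier_mat n n" unfolding Q_def Aeq by auto
  have Pc: "arc_walk_matrix E \<in> carrier_mat N N" unfolding HT[symmetric] using Hc Tc by auto
  have nz: "\<And>M k. M \<in> carrier_mat k k \<Longrightarrow> char_poly M \<noteq> (0::complex poly)"
    using degree_monic_char_poly by (metis one_neq_zero leading_coeff_0_iff)
  define MP where "MP = proots (char_poly (arc_walk_matrix E))"
  define MQ where "MQ = proots (char_poly Q)"
  define MA where "MA = proots (char_poly A)"
  have MA: "MA = image_mset (\<lambda>i. complex_of_real (lam i)) (mset_set {1..n})"
    using assms(6) unfolding MA_def A_def eigenvalues_mset_def n_def .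
  have cpQ: "char_poly Q = char_poly ((1 / sc) \<cdot>\<^sub>m A)" by (rule char_poly_similar[OF sim])
  have MQ: "MQ = image_mset (\<lambda>i. complex_of_real (lam i) / sc) (mset_set {1..n})"
  proof (rule multiset_eqI)
    fix z
    have "count MQ z = order z (char_poly ((1 / sc) \<cdot>\<^sub>m A))"
      unfolding MQ_def cpQ using nz[OF smult_carrier_mat[OF Ac]] by simp
    also have "\<dots> = order (z * sc) (char_poly A)"
      using order_char_poly_smult[OF Ac, of "1/sc" z] sc0 by simp
    also have "\<dots> = count MA (z * sc)" unfolding MA_def using nz[OF Ac] by simp
    also have "\<dots> = count (image_mset (\<lambda>w. w / sc) MA) ((z * sc) / sc)"
      by (rule count_image_inj[symmetric]) (use sc0 in \<open>auto simp: inj_def\<close>)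
    also have "image_mset (\<lambda>w. w / sc) MA = image_mset (\<lambda>i. complex_of_real (lam i) / sc) (mset_set {1..n})"
      unfolding MA by (simp add: multiset.map_comp o_def)
    finally show "count MQ z = count (image_mset (\<lambda>i. complex_of_real (lam i) / sc) (mset_set {1..n})) z"
      using sc0 by simp
  qed
  have syl: "[:0,1:]^N * char_poly Q = [:0,1:]^n * char_poly (arc_walk_matrix E)"
    using sylvester_char_poly[OF Hc Tc] unfolding HT TH .
  have "proots ([:0,1:]^N * char_poly Q) = proots ([:0,1:]^n * char_poly (arc_walk_matrix E))"
    using syl by simp
  hence msum: "repeat_mset N {#0#} + MQ = repeat_mset n {#0#} + MP"
    unfolding MQ_def MP_def
    by (subst (asm) (1 2) proots_mult) (use nz[OF Qc] nz[OF Pc] in \<open>auto simp: proots_power proots_linear_factor[of 0, simplified]\<close>)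
  define f :: "complex \<Rightarrow> complex" where "f \<rho> = 1 / (1 - \<rho>)" for \<rho>
  have "sum_mset (image_mset f (repeat_mset N {#0#} + MQ)) = sum_mset (image_mset f (repeat_mset n {#0#} + MP))"
    using msum by simp
  hence sums: "of_nat N + sum_mset (image_mset f MQ) = of_nat n + sum_mset (image_mset f MP)"
    by (simp add: f_def)
  have kem: "kemeny_edge E = sum_mset (image_mset f MP)"
  proof (cases "1 \<in># MP")
    case True
    hence "MP = add_mset 1 (MP - {#1#})" by simp
    hence "sum_mset (image_mset f MP) = f 1 + sum_mset (image_mset f (MP - {#1#}))"
      by (metis image_mset_add_mset sum_mset.insert)
    thus ?thesis unfolding kemeny_edge_def kemeny_def eigenvalues_mset_def MP_def[symmetric] f_def by simp
  next
    case False
    hence "MP - {#1#} = MP" by simp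
    thus ?thesis unfolding kemeny_edge_def kemeny_def eigenvalues_mset_def MP_def[symmetric] f_def by simp
  qed
  have sQ: "sum_mset (image_mset f MQ) = (\<Sum>i\<in>{1..n}. complex_of_real (s / (s - lam i)))"
  proof -
    have "sum_mset (image_mset f MQ) = (\<Sum>i\<in>{1..n}. f (complex_of_real (lam i) / sc))"
      unfolding MQ by (simp add: sum_unfold_sum_mset multiset.map_comp o_def)
    also have "\<dots> = (\<Sum>i\<in>{1..n}. complex_of_real (s / (s - lam i)))"
    proof (rule sum.cong[OF refl])
      fix i
      show "f (complex_of_real (lam i) / sc) = complex_of_real (s / (s - lam i))"
      proof (cases "lam i = s")
        case True thus ?thesis unfolding f_def sc_def using s0 by simp
      next
        case False
        hence "1 - complex_of_real (lam i) / sc = complex_of_real ((s - lam i) / s)"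
          unfolding sc_def using s0 by (simp add: field_simps)
        thus ?thesis unfolding f_def by simp
      qed
    qed
    finally show ?thesis .
  qed
  have n1: "n \<ge> 1" using gf(11) fV unfolding n_def by (simp add: Suc_leI card_gt_0_iff)
  have lam1: "lam 1 = s"
  proof -
    define r where "r i j = (if {vs!i, vs!j} \<in> E then 1 / real (degree E (vs!i)) else 0)" for i j
    have Qr: "\<And>i j. i < n \<Longrightarrow> j < n \<Longrightarrow> Q$$(i,j) = of_real (r i j)" unfolding Q_def r_def by simp
    have rnn: "\<And>i j. r i j \<ge> 0" unfolding r_def by simp
    have rs: "\<And>i. i < n \<Longrightarrow> (\<Sum>j=0..<n. r i j) = 1"
    proof -
      fix i assume i: "i < n"
      have "(\<Sum>j=0..<n. r i j) = (\<Sum>w\<in>V. if {vs!i, w} \<in> E then 1 / real (degree E (vs!i)) else 0)"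
        using sum_enum[OF V(2), of "\<lambda>w. if {vs!i, w} \<in> E then 1 / real (degree E (vs!i)) else 0"] V
        unfolding r_def by simp
      also have "\<dots> = real (card {w\<in>V. {vs!i, w} \<in> E}) * (1 / real (degree E (vs!i)))"
        by (rule sum_if_card[OF fV])
      also have "{w\<in>V. {vs!i, w} \<in> E} = {w. {vs!i, w} \<in> E}" using gf(10) by blast
      also have "real (card {w. {vs!i, w} \<in> E}) * (1 / real (degree E (vs!i))) = 1"
        using gf(8)[OF vsV[OF i]] unfolding degree_def by simp
      finally show "(\<Sum>j=0..<n. r i j) = 1" .
    qed
    have "poly (char_poly Q) 1 = 0" by (rule stoch_eig_one[OF Qc _ Qr rs]) (use n1 in simp)
    hence "1 \<in># MQ" unfolding MQ_def using nz[OF Qc] by simp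
    then obtain i0 where i0: "i0 \<in> {1..n}" "complex_of_real (lam i0) / sc = 1" unfolding MQ using fV by auto
    hence "complex_of_real (lam i0) = complex_of_real s" unfolding sc_def using s0 by (simp add: field_simps)
    hence li0: "lam i0 = s" by simp
    have bnd: "\<And>\<mu>. poly (char_poly Q) \<mu> = 0 \<Longrightarrow> cmod \<mu> \<le> 1"
      using stoch_eig_bound[OF Qc Qr rnn rs] .
    have le: "\<And>i. i \<in> {1..n} \<Longrightarrow> lam i \<le> s"
    proof -
      fix i assume i: "i \<in> {1..n}"
      hence "i \<in># mset_set {1..n}" by simp
      hence "complex_of_real (lam i) / sc \<in># MQ" unfolding MQ set_image_mset by (rule imageI)
      hence "poly (char_poly Q) (complex_of_real (lam i) / sc) = 0" unfolding MQ_def using nz[OF Qc] by simp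
      hence "cmod (complex_of_real (lam i) / sc) \<le> 1" by (rule bnd)
      hence "\<bar>lam i\<bar> / s \<le> 1" unfolding sc_def using s0 by (simp add: norm_divide)
      hence "\<bar>lam i\<bar> \<le> s" using s0 by (simp add: field_simps)
      thus "lam i \<le> s" by simp
    qed
    have "lam i0 \<le> lam 1" using assms(5)[of 1 i0] i0 unfolding n_def by auto
    moreover have "lam 1 \<le> s" using le n1 by auto
    ultimately show ?thesis using li0 by simp
  qed
  have split: "(\<Sum>i\<in>{1..n}. complex_of_real (s / (s - lam i))) = (\<Sum>i\<in>{2..n}. complex_of_real (s / (s - lam i)))"
    using n1 lam1 by (simp add: sum.atLeast_Suc_atMost numeral_2_eq_2)
  have "kemeny_edge E = of_nat N - of_nat n + (\<Sum>i\<in>{2..n}. complex_of_real (s / (s - lam i)))"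
    using kem sums sQ split by (simp add: algebra_simps)
  thus ?thesis unfolding N_def n_def s_def gf(5) by simp
qed
end
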